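(* Let $(E,\pi,M)$ be a bundle with a $C^1$ connection $\Delta^h$, let $\{u^I\}$ be bundle coordinates, $\Gamma_\mu^a$ the coefficients of $\Delta^h$ in the frame $\{X_I\}$ adapted to $\{\partial/\partial u^I\}$, and $U$ an open set in the domain of $\{u^I\}$. If the normal coordinates equation $$\Big(\frac{\partial\tilde u^a}{\partial u^b}\Gamma_\mu^b+\frac{\partial\tilde u^a}{\partial u^\mu}\Big)\Big|_U=0$$ admits solutions $\{\tilde u^a\}$ (fibre components of bundle coordinates) on $U$, then $R^a_{\mu\nu}|_U=0$, where $$R^a_{\mu\nu}=\partial_\mu(\Gamma_\nu^a)-\partial_\nu(\Gamma_\mu^a)+\Gamma_\mu^b\partial_b(\Gamma_\nu^a)-\Gamma_\nu^b\partial_b(\Gamma_\mu^a)=X_\mu(\Gamma_\nu^a)-X_\nu(\Gamma_\mu^a),\qquad \partial_I=\partial/\partial u^I,$$ are the fibre components of the curvature of $\Delta^h$.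
   Context: $\dim M=n$, fibre dimension $r$; indices $\mu,\nu$ over $1,\dots,n$, $a,b$ over $n+1,\dots,n+r$, $I$ over $1,\dots,n+r$; summation convention. Bundle coordinates: $u^\mu=x^\mu\circ\pi$ for base coordinates. Vertical distribution $\Delta^v_p=T_p(\pi^{-1}(\pi(p)))$; a connection is an $n$-dimensional distribution $\Delta^h$ with $\Delta^v_p\oplus\Delta^h_p=T_p(E)$. The adapted frame is $X_\mu=(\pi_*|_{\Delta^h})^{-1}\pi_*(\partial_\mu)$, $X_a=\partial_a$, and $X_\mu=\partial_\mu+\Gamma_\mu^b\partial_b$ defines $\Gamma_\mu^a$. *)

theory Defs
  imports "HOL-Analysis.Analysis"
begin

text \<open>A point of the coordinate domain is a vector
  p :: real^('m + 'r); its base coordinates are u^mu = p $ Inl mu and its fibre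
  coordinates are u^a = p $ Inr a.  The index Inl mu / Inr a plays the role of I.\<close>

definition pd :: "(real^'i \<Rightarrow> real) \<Rightarrow> 'i \<Rightarrow> real^'i \<Rightarrow> real" where
  "pd f i p = deriv (\<lambda>t. f (p + t *\<^sub>R axis i 1)) 0"

definition has_partials_on :: "(real^'i) set \<Rightarrow> (real^'i \<Rightarrow> real) \<Rightarrow> bool" where
  "has_partials_on U f \<longleftrightarrow>
     (\<forall>i. \<forall>p\<in>U. (\<lambda>t. f (p + t *\<^sub>R axis i 1)) differentiable (at 0))"

fun Ck_on :: "nat \<Rightarrow> (real^'i) set \<Rightarrow> (real^'i \<Rightarrow> real) \<Rightarrow> bool" where
  "Ck_on 0 U f = continuous_on U f"
| "Ck_on (Suc k) U f = (continuous_on U f \<and> has_partials_on U f \<and> (\<forall>i. Ck_on k U (pd f i)))"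

definition smooth_fun_on :: "(real^'i) set \<Rightarrow> (real^'i \<Rightarrow> real) \<Rightarrow> bool" where
  "smooth_fun_on U f \<longleftrightarrow> (\<forall>k. Ck_on k U f)"

definition curv ::
  "('m::finite \<Rightarrow> 'r::finite \<Rightarrow> real^('m + 'r) \<Rightarrow> real) \<Rightarrow> 'r \<Rightarrow> 'm \<Rightarrow> 'm \<Rightarrow> real^('m + 'r) \<Rightarrow> real" where
  "curv \<Gamma> a \<mu> \<nu> p =
     pd (\<Gamma> \<nu> a) (Inl \<mu>) p - pd (\<Gamma> \<mu> a) (Inl \<nu>) p
     + (\<Sum>b\<in>UNIV. \<Gamma> \<mu> b p * pd (\<Gamma> \<nu> a) (Inr b) p)
     - (\<Sum>b\<in>UNIV. \<Gamma> \<nu> b p * pd (\<Gamma> \<mu> a) (Inr b) p)"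

definition new_coords ::
  "('r::finite \<Rightarrow> real^('m::finite + 'r) \<Rightarrow> real) \<Rightarrow> real^('m + 'r) \<Rightarrow> real^('m + 'r)" where
  "new_coords ut p = (\<chi> i. case i of Inl \<mu> \<Rightarrow> p $ Inl \<mu> | Inr a \<Rightarrow> ut a p)"

definition jacobian :: "(real^'i \<Rightarrow> real^'i) \<Rightarrow> real^'i \<Rightarrow> real^'i^'i" where
  "jacobian F p = (\<chi> i j. pd (\<lambda>q. F q $ i) j p)"

end

theory Submission
  imports Defs
begin


lemma clairaut2:
  fixes g ga gb gab gba :: "real \<Rightarrow> real \<Rightarrow> real"
  assumes r: "r > 0"
  and d1: "\<And>s t. \<bar>s\<bar> < r \<Longrightarrow> \<bar>t\<bar> < r \<Longrightarrow> ((\<lambda>\<sigma>. g \<sigma> t) has_real_derivative ga s t) (at s)"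
  and d2: "\<And>s t. \<bar>s\<bar> < r \<Longrightarrow> \<bar>t\<bar> < r \<Longrightarrow> ((\<lambda>\<tau>. g s \<tau>) has_real_derivative gb s t) (at t)"
  and d12: "\<And>s t. \<bar>s\<bar> < r \<Longrightarrow> \<bar>t\<bar> < r \<Longrightarrow> ((\<lambda>\<tau>. ga s \<tau>) has_real_derivative gab s t) (at t)"
  and d21: "\<And>s t. \<bar>s\<bar> < r \<Longrightarrow> \<bar>t\<bar> < r \<Longrightarrow> ((\<lambda>\<sigma>. gb \<sigma> t) has_real_derivative gba s t) (at s)"
  and c12: "\<And>e. e > 0 \<Longrightarrow> \<exists>d>0. \<forall>s t. \<bar>s\<bar> < d \<longrightarrow> \<bar>t\<bar> < d \<longrightarrow> \<bar>gab s t - gab 0 0\<bar> < e"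
  and c21: "\<And>e. e > 0 \<Longrightarrow> \<exists>d>0. \<forall>s t. \<bar>s\<bar> < d \<longrightarrow> \<bar>t\<bar> < d \<longrightarrow> \<bar>gba s t - gba 0 0\<bar> < e"
  shows "gab 0 0 = gba 0 0"
proof -
  have key: "\<exists>s t s' t'. 0<s \<and> s<h \<and> 0<t \<and> t<h \<and> 0<s' \<and> s'<h \<and> 0<t' \<and> t'<h \<and> gab s t = gba s' t'"
    if h: "0 < h" "h < r" for h
  proof -
    have "\<exists>z. 0 < z \<and> z < h \<and> (g h h - g h 0) - (g 0 h - g 0 0) = (h - 0) * (ga z h - ga z 0)"
      by (rule MVT2[of 0 h "\<lambda>s. g s h - g s 0" "\<lambda>s. ga s h - ga s 0"]) (use h in \<open>auto intro!: DERIV_diff d1\<close>)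
    then obtain \<xi> where \<xi>: "0 < \<xi>" "\<xi> < h"
      and e1: "(g h h - g h 0) - (g 0 h - g 0 0) = (h - 0) * (ga \<xi> h - ga \<xi> 0)" by blast
    have "\<exists>z. 0 < z \<and> z < h \<and> ga \<xi> h - ga \<xi> 0 = (h - 0) * gab \<xi> z"
      by (rule MVT2[of 0 h "ga \<xi>" "gab \<xi>"]) (use h \<xi> in \<open>auto intro!: d12\<close>)
    then obtain \<eta> where \<eta>: "0 < \<eta>" "\<eta> < h"
      and e2: "ga \<xi> h - ga \<xi> 0 = (h - 0) * gab \<xi> \<eta>" by blast
    have "\<exists>z. 0 < z \<and> z < h \<and> (g h h - g 0 h) - (g h 0 - g 0 0) = (h - 0) * (gb h z - gb 0 z)"
      by (rule MVT2[of 0 h "\<lambda>t. g h t - g 0 t" "\<lambda>t. gb h t - gb 0 t"]) (use h in \<open>auto intro!: DERIV_diff d2\<close>)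
    then obtain \<eta>' where \<eta>': "0 < \<eta>'" "\<eta>' < h"
      and e3: "(g h h - g 0 h) - (g h 0 - g 0 0) = (h - 0) * (gb h \<eta>' - gb 0 \<eta>')" by blast
    have "\<exists>z. 0 < z \<and> z < h \<and> gb h \<eta>' - gb 0 \<eta>' = (h - 0) * gba z \<eta>'"
      by (rule MVT2[of 0 h "\<lambda>s. gb s \<eta>'" "\<lambda>s. gba s \<eta>'"]) (use h \<eta>' in \<open>auto intro!: d21\<close>)
    then obtain \<xi>' where \<xi>': "0 < \<xi>'" "\<xi>' < h"
      and e4: "gb h \<eta>' - gb 0 \<eta>' = (h - 0) * gba \<xi>' \<eta>'" by blast
    have "h * h * gab \<xi> \<eta> = h * h * gba \<xi>' \<eta>'"
      using e1 e2 e3 e4 by (simp add: algebra_simps)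
    then have "gab \<xi> \<eta> = gba \<xi>' \<eta>'" using h by simp
    then show ?thesis using \<xi> \<eta> \<xi>' \<eta>' by blast
  qed
  show ?thesis
  proof (rule ccontr)
    assume ne: "gab 0 0 \<noteq> gba 0 0"
    define e where "e = \<bar>gab 0 0 - gba 0 0\<bar> / 2"
    have e: "e > 0" using ne by (simp add: e_def)
    obtain da where da: "da > 0" "\<forall>s t. \<bar>s\<bar> < da \<longrightarrow> \<bar>t\<bar> < da \<longrightarrow> \<bar>gab s t - gab 0 0\<bar> < e"
      using c12[OF e] by blast
    obtain db where db: "db > 0" "\<forall>s t. \<bar>s\<bar> < db \<longrightarrow> \<bar>t\<bar> < db \<longrightarrow> \<bar>gba s t - gba 0 0\<bar> < e"
      using c21[OF e] by blast
    define h where "h = min r (min da db) / 2"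
    have h: "0 < h" "h < r" "h < da" "h < db" using r da db by (auto simp: h_def)
    obtain s t s' t' where st: "0<s" "s<h" "0<t" "t<h" "0<s'" "s'<h" "0<t'" "t'<h"
      and eq: "gab s t = gba s' t'" using key[OF h(1,2)] by blast
    have "\<bar>gab s t - gab 0 0\<bar> < e" using da st h by auto
    moreover have "\<bar>gba s' t' - gba 0 0\<bar> < e" using db st h by auto
    ultimately show False using eq e_def by (simp add: abs_if split: if_splits)
  qed
qed

lemma hpd:
  assumes "has_partials_on U h" "q \<in> U"
  shows "((\<lambda>\<sigma>. h (q + \<sigma> *\<^sub>R axis i 1)) has_real_derivative pd h i q) (at 0)"
  using assms unfolding has_partials_on_def pd_def
  using DERIV_deriv_iff_real_differentiable by blast

lemma norm_P: "norm (s *\<^sub>R axis i (1::real) + t *\<^sub>R axis j 1) \<le> \<bar>s\<bar> + \<bar>t\<bar>"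
  using norm_triangle_ineq[of "s *\<^sub>R axis i (1::real)" "t *\<^sub>R axis j 1"] by simp

lemma clairaut_vec:
  fixes f :: "real^'i \<Rightarrow> real"
  assumes U: "open U" "p \<in> U" and f1: "has_partials_on U f"
    and f2: "\<And>i. has_partials_on U (pd f i)"
    and fc: "\<And>i j. continuous_on U (pd (pd f i) j)"
  shows "pd (pd f i) j p = pd (pd f j) i p"
proof -
  obtain r where r: "r > 0" "ball p r \<subseteq> U" using U open_contains_ball by blast
  define P where "P s t = p + s *\<^sub>R axis i 1 + t *\<^sub>R axis j 1" for s t
  have Pd: "dist (P s t) p \<le> \<bar>s\<bar> + \<bar>t\<bar>" for s t
    using norm_P[of s i t j] by (simp add: P_def dist_norm)
  have P0: "P 0 0 = p" by (simp add: P_def)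
  have PU: "P s t \<in> U" if "\<bar>s\<bar> < r/2" "\<bar>t\<bar> < r/2" for s t
  proof -
    have "dist p (P s t) < r" using Pd[of s t] that by (simp add: dist_commute)
    then show ?thesis using r by auto
  qed
  have shi: "((\<lambda>\<sigma>. h (P \<sigma> t)) has_real_derivative pd h i (P s t)) (at s)"
    if "has_partials_on U h" "\<bar>s\<bar> < r/2" "\<bar>t\<bar> < r/2" for h s t
  proof -
    have "((\<lambda>\<sigma>. h (P s t + \<sigma> *\<^sub>R axis i 1)) has_real_derivative pd h i (P s t)) (at 0)"
      using hpd[OF that(1) PU[OF that(2,3)]] .
    moreover have "(\<lambda>\<sigma>. h (P s t + \<sigma> *\<^sub>R axis i 1)) = (\<lambda>\<sigma>. h (P (\<sigma> + s) t))"
      by (auto simp: P_def algebra_simps scaleR_add_left)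
    ultimately show ?thesis using DERIV_shift[of "\<lambda>\<sigma>. h (P \<sigma> t)" _ 0 s] by simp
  qed
  have shj: "((\<lambda>\<tau>. h (P s \<tau>)) has_real_derivative pd h j (P s t)) (at t)"
    if "has_partials_on U h" "\<bar>s\<bar> < r/2" "\<bar>t\<bar> < r/2" for h s t
  proof -
    have "((\<lambda>\<sigma>. h (P s t + \<sigma> *\<^sub>R axis j 1)) has_real_derivative pd h j (P s t)) (at 0)"
      using hpd[OF that(1) PU[OF that(2,3)]] .
    moreover have "(\<lambda>\<sigma>. h (P s t + \<sigma> *\<^sub>R axis j 1)) = (\<lambda>\<sigma>. h (P s (\<sigma> + t)))"
      by (auto simp: P_def algebra_simps scaleR_add_left)
    ultimately show ?thesis using DERIV_shift[of "\<lambda>\<tau>. h (P s \<tau>)" _ 0 t] by simp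
  qed
  have cont: "\<exists>d>0. \<forall>s t. \<bar>s\<bar> < d \<longrightarrow> \<bar>t\<bar> < d \<longrightarrow>
      \<bar>pd (pd f k) l (P s t) - pd (pd f k) l (P 0 0)\<bar> < e" if e: "e > 0" for k l e
  proof -
    have "isCont (pd (pd f k) l) p" using fc U continuous_on_eq_continuous_at by blast
    then obtain d where d: "d > 0" "\<forall>x. dist x p < d \<longrightarrow> dist (pd (pd f k) l x) (pd (pd f k) l p) < e"
      using e unfolding continuous_at_eps_delta by blast
    show ?thesis
    proof (intro exI[of _ "d/2"] conjI allI impI)
      fix s t assume "\<bar>s\<bar> < d/2" "\<bar>t\<bar> < d/2"
      then have "dist (P s t) p < d" using Pd[of s t] by linarith
      then show "\<bar>pd (pd f k) l (P s t) - pd (pd f k) l (P 0 0)\<bar> < e"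
        using d P0 by (simp add: dist_real_def)
    qed (use d in auto)
  qed
  have "pd (pd f i) j (P 0 0) = pd (pd f j) i (P 0 0)"
    by (rule clairaut2[where r="r/2" and g="\<lambda>s t. f (P s t)" and ga="\<lambda>s t. pd f i (P s t)"
        and gb="\<lambda>s t. pd f j (P s t)" and gab="\<lambda>s t. pd (pd f i) j (P s t)"
        and gba="\<lambda>s t. pd (pd f j) i (P s t)"])
      (use r cont in \<open>auto intro!: shi shj f1 f2 simp del: all_simps(5)\<close>)
  then show ?thesis using P0 by simp
qed


lemma curv_alg:
  fixes F :: "'r::finite \<Rightarrow> ('m::finite + 'r) \<Rightarrow> real" and Fm :: "'m \<Rightarrow> ('m + 'r) \<Rightarrow> real"
    and G :: "'m \<Rightarrow> 'r \<Rightarrow> ('m + 'r) \<Rightarrow> real" and g :: "'m \<Rightarrow> 'r \<Rightarrow> real" and d :: "'r \<Rightarrow> real"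
  assumes key: "\<And>\<mu> j. (\<Sum>b\<in>UNIV. F b j * g \<mu> b + d b * G \<mu> b j) + Fm \<mu> j = 0"
    and s1: "\<And>b \<nu>. F b (Inl \<nu>) = Fm \<nu> (Inr b)"
    and s2: "\<And>b c. F b (Inr c) = F c (Inr b)"
    and s3: "\<And>\<mu> \<nu>. Fm \<mu> (Inl \<nu>) = Fm \<nu> (Inl \<mu>)"
  shows "(\<Sum>b\<in>UNIV. d b * (G \<nu> b (Inl \<mu>) - G \<mu> b (Inl \<nu>) + (\<Sum>c\<in>UNIV. g \<mu> c * G \<nu> b (Inr c))
            - (\<Sum>c\<in>UNIV. g \<nu> c * G \<mu> b (Inr c)))) = 0"
proof -
  define T where "T \<mu> \<nu> = (\<Sum>b\<in>UNIV. Fm \<nu> (Inr b) * g \<mu> b) + Fm \<mu> (Inl \<nu>)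
     + (\<Sum>c\<in>UNIV. \<Sum>b\<in>UNIV. g \<nu> c * g \<mu> b * F b (Inr c)) + (\<Sum>c\<in>UNIV. g \<nu> c * Fm \<mu> (Inr c))" for \<mu> \<nu>
  define N where "N \<mu> \<nu> = (\<Sum>b\<in>UNIV. d b * (G \<mu> b (Inl \<nu>) + (\<Sum>c\<in>UNIV. g \<nu> c * G \<mu> b (Inr c))))" for \<mu> \<nu>
  have S: "T \<mu> \<nu> + N \<mu> \<nu> = 0" for \<mu> \<nu>
  proof -
    have "0 = ((\<Sum>b\<in>UNIV. F b (Inl \<nu>) * g \<mu> b + d b * G \<mu> b (Inl \<nu>)) + Fm \<mu> (Inl \<nu>))
       + (\<Sum>c\<in>UNIV. g \<nu> c * ((\<Sum>b\<in>UNIV. F b (Inr c) * g \<mu> b + d b * G \<mu> b (Inr c)) + Fm \<mu> (Inr c)))"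
      using key by simp
    also have "\<dots> = T \<mu> \<nu> + N \<mu> \<nu>"
    proof -
      have e1: "(\<Sum>c\<in>UNIV. g \<nu> c * (\<Sum>b\<in>UNIV. d b * G \<mu> b (Inr c)))
          = (\<Sum>b\<in>UNIV. d b * (\<Sum>c\<in>UNIV. g \<nu> c * G \<mu> b (Inr c)))"
        unfolding sum_distrib_left by (subst sum.swap) (simp add: mult_ac)
      have e2: "(\<Sum>c\<in>UNIV. g \<nu> c * (\<Sum>b\<in>UNIV. F b (Inr c) * g \<mu> b))
          = (\<Sum>c\<in>UNIV. \<Sum>b\<in>UNIV. g \<nu> c * g \<mu> b * F b (Inr c))"
        unfolding sum_distrib_left by (simp add: mult_ac)
      have e3: "(\<Sum>c\<in>UNIV. g \<nu> c * ((\<Sum>b\<in>UNIV. F b (Inr c) * g \<mu> b + d b * G \<mu> b (Inr c)) + Fm \<mu> (Inr c)))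
         = (\<Sum>c\<in>UNIV. g \<nu> c * (\<Sum>b\<in>UNIV. F b (Inr c) * g \<mu> b))
           + (\<Sum>c\<in>UNIV. g \<nu> c * (\<Sum>b\<in>UNIV. d b * G \<mu> b (Inr c)))
           + (\<Sum>c\<in>UNIV. g \<nu> c * Fm \<mu> (Inr c))"
        by (simp only: sum.distrib distrib_left)
      have e4: "(\<Sum>b\<in>UNIV. F b (Inl \<nu>) * g \<mu> b + d b * G \<mu> b (Inl \<nu>))
         = (\<Sum>b\<in>UNIV. Fm \<nu> (Inr b) * g \<mu> b) + (\<Sum>b\<in>UNIV. d b * G \<mu> b (Inl \<nu>))"
        by (simp only: sum.distrib s1)
      have e5: "N \<mu> \<nu> = (\<Sum>b\<in>UNIV. d b * G \<mu> b (Inl \<nu>)) + (\<Sum>b\<in>UNIV. d b * (\<Sum>c\<in>UNIV. g \<nu> c * G \<mu> b (Inr c)))"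
        unfolding N_def by (simp only: sum.distrib distrib_left)
      show ?thesis unfolding e3 e4 e5 e1 e2 T_def by simp
    qed
    finally show ?thesis by simp
  qed
  have Tsym: "T \<mu> \<nu> = T \<nu> \<mu>"
  proof -
    have "(\<Sum>c\<in>UNIV. \<Sum>b\<in>UNIV. g \<nu> c * g \<mu> b * F b (Inr c)) = (\<Sum>c\<in>UNIV. \<Sum>b\<in>UNIV. g \<mu> c * g \<nu> b * F b (Inr c))"
      by (subst sum.swap) (simp add: s2 mult_ac)
    then show ?thesis unfolding T_def using s3[of \<mu> \<nu>] by (simp add: mult_ac)
  qed
  have "(\<Sum>b\<in>UNIV. d b * (G \<nu> b (Inl \<mu>) - G \<mu> b (Inl \<nu>) + (\<Sum>c\<in>UNIV. g \<mu> c * G \<nu> b (Inr c))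
            - (\<Sum>c\<in>UNIV. g \<nu> c * G \<mu> b (Inr c)))) = N \<nu> \<mu> - N \<mu> \<nu>"
    unfolding N_def by (simp add: sum_subtractf[symmetric] algebra_simps)
  also have "\<dots> = 0" using S[of \<mu> \<nu>] S[of \<nu> \<mu>] Tsym by simp
  finally show ?thesis .
qed

lemma deriv_eq:
  fixes H G :: "'r::finite \<Rightarrow> real^'i \<Rightarrow> real" and K :: "real^'i \<Rightarrow> real"
  assumes U: "open U" "p \<in> U"
    and hH: "\<And>b. has_partials_on U (H b)" and hK: "has_partials_on U K"
    and hG: "\<And>b. has_partials_on U (G b)"
    and zero: "\<And>q. q \<in> U \<Longrightarrow> (\<Sum>b\<in>UNIV. H b q * G b q) + K q = 0"
  shows "(\<Sum>b\<in>UNIV. pd (H b) j p * G b p + H b p * pd (G b) j p) + pd K j p = 0"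
proof -
  define E where "E t = (\<Sum>b\<in>UNIV. H b (p + t *\<^sub>R axis j 1) * G b (p + t *\<^sub>R axis j 1)) + K (p + t *\<^sub>R axis j 1)" for t
  have m: "((\<lambda>t. H b (p + t *\<^sub>R axis j 1) * G b (p + t *\<^sub>R axis j 1)) has_real_derivative
      pd (H b) j p * G b p + H b p * pd (G b) j p) (at 0)" for b
    using DERIV_mult[OF hpd[OF hH[of b] U(2), of j] hpd[OF hG[of b] U(2), of j]] by (simp add: mult.commute)
  have D: "(E has_real_derivative (\<Sum>b\<in>UNIV. pd (H b) j p * G b p + H b p * pd (G b) j p) + pd K j p) (at 0)"
    unfolding E_def by (intro DERIV_add DERIV_sum m hpd[OF hK U(2)])
  obtain r where r: "r > 0" "ball p r \<subseteq> U" using U open_contains_ball by blast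
  have "((\<lambda>t. 0) has_real_derivative (\<Sum>b\<in>UNIV. pd (H b) j p * G b p + H b p * pd (G b) j p) + pd K j p) (at 0)"
  proof (rule has_field_derivative_transform_within_open[OF D, of "ball 0 r"])
    fix t :: real assume "t \<in> ball 0 r"
    then have "p + t *\<^sub>R axis j 1 \<in> U" using r by (auto simp: dist_norm)
    then show "E t = 0" unfolding E_def by (rule zero)
  qed (use r in auto)
  then show ?thesis using DERIV_unique DERIV_const by blast
qed

lemma sum_UNIV_plus:
  "sum g (UNIV::('a::finite + 'b::finite) set) = (\<Sum>x\<in>UNIV. g (Inl x)) + (\<Sum>y\<in>UNIV. g (Inr y))"
  using sum.Plus[of "UNIV::'a set" "UNIV::'b set" g] by (simp add: comp_def)

theorem proposition5p4:
  fixes \<Gamma> :: "'m::finite \<Rightarrow> 'r::finite \<Rightarrow> real^('m + 'r) \<Rightarrow> real"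
    and ut :: "'r \<Rightarrow> real^('m + 'r) \<Rightarrow> real"
    and U :: "(real^('m + 'r)) set"
  assumes U_open: "open U"
    and \<Gamma>_C1: "\<And>\<mu> a. Ck_on 1 U (\<Gamma> \<mu> a)"
    and ut_smooth: "\<And>a. smooth_fun_on U (ut a)"
    and ut_inj: "inj_on (new_coords ut) U"
    and ut_chart: "\<And>p. p \<in> U \<Longrightarrow> invertible (jacobian (new_coords ut) p)"
    and normal_eq: "\<And>p a \<mu>. p \<in> U \<Longrightarrow>
        (\<Sum>b\<in>UNIV. pd (ut a) (Inr b) p * \<Gamma> \<mu> b p) + pd (ut a) (Inl \<mu>) p = 0"
  shows "\<forall>p\<in>U. \<forall>a \<mu> \<nu>. curv \<Gamma> a \<mu> \<nu> p = 0"
proof (intro ballI allI)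
  fix p a \<mu> \<nu> assume p: "p \<in> U"
  have Ck2: "Ck_on (Suc (Suc 0)) U (ut b)" for b using ut_smooth unfolding smooth_fun_on_def by blast
  have ut1: "has_partials_on U (ut b)" for b using Ck2[of b] by simp
  have ut2: "has_partials_on U (pd (ut b) i)" for b i using Ck2[of b] by simp
  have utc: "continuous_on U (pd (pd (ut b) i) j)" for b i j using Ck2[of b] by simp
  have G1: "has_partials_on U (\<Gamma> m b)" for m b using \<Gamma>_C1[of m b] by simp
  have sym: "pd (pd (ut b) i) j p = pd (pd (ut b) j) i p" for b i j
    by (rule clairaut_vec[OF U_open p ut1 ut2 utc])
  have zero: "(\<Sum>b\<in>UNIV. pd (ut a') (Inr b) p * curv \<Gamma> b \<mu> \<nu> p) = 0" for a'
    unfolding curv_def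
  proof (rule curv_alg[where F="\<lambda>b j. pd (pd (ut a') (Inr b)) j p"
        and Fm="\<lambda>m j. pd (pd (ut a') (Inl m)) j p" and G="\<lambda>m b j. pd (\<Gamma> m b) j p"
        and g="\<lambda>m b. \<Gamma> m b p" and d="\<lambda>b. pd (ut a') (Inr b) p"])
    fix m j
    show "(\<Sum>b\<in>UNIV. pd (pd (ut a') (Inr b)) j p * \<Gamma> m b p + pd (ut a') (Inr b) p * pd (\<Gamma> m b) j p)
        + pd (pd (ut a') (Inl m)) j p = 0"
      by (rule deriv_eq[OF U_open p ut2 ut2 G1]) (rule normal_eq)
  qed (use sym in auto)
  define w :: "real^('m + 'r)" where "w = (\<chi> i. case i of Inl _ \<Rightarrow> 0 | Inr b \<Rightarrow> curv \<Gamma> b \<mu> \<nu> p)"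
  define J where "J = jacobian (new_coords ut) p"
  have Jr: "J $ Inr a' $ Inr b = pd (ut a') (Inr b) p" for a' b
    unfolding J_def jacobian_def new_coords_def by simp
  have Jl: "J $ Inl m $ Inr b = 0" for m b
  proof -
    have "(\<lambda>t. (p + t *\<^sub>R axis (Inr b) 1) $ Inl m) = (\<lambda>t. p $ Inl m)"
      by (simp add: axis_def)
    then show ?thesis unfolding J_def jacobian_def new_coords_def pd_def
      by (simp add: DERIV_imp_deriv[OF DERIV_const])
  qed
  have Jw: "J *v w = 0"
  unfolding vec_eq_iff
  proof (intro allI)
    fix k
    show "(J *v w) $ k = 0 $ k"
    proof (cases k)
      case (Inl m) then show ?thesis
        by (simp add: matrix_vector_mult_def sum_UNIV_plus w_def Jl)
    next
      case (Inr a') then show ?thesis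
        using zero[of a'] by (simp add: matrix_vector_mult_def sum_UNIV_plus w_def Jr)
    qed
  qed
  obtain B where B: "B ** J = mat 1" using ut_chart[OF p] unfolding invertible_def J_def by blast
  have "w = (B ** J) *v w" using B by simp
  also have "\<dots> = B *v (J *v w)" by (simp add: matrix_vector_mul_assoc)
  also have "\<dots> = 0" using Jw by simp
  finally have "w = 0" .
  then have "w $ Inr a = 0" by simp
  then show "curv \<Gamma> a \<mu> \<nu> p = 0" by (simp add: w_def)
qed

end
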